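(* Let $G$ be a graph and $B\subseteq V(G)$. Then $B$ is a $1$-edge-leaky forcing set of $G$ if and only if for every $v\in V(G)\setminus B$ there exist forces $x\to v$ and $y\to v$ in $\mathcal{F}(B)$ with $x\neq y$.
   Context: All graphs are finite, simple and undirected. Zero forcing: vertices are blue or white; a blue vertex $u$ with exactly one white neighbor $w$ may force $w$ (color it blue), written $u\to w$. Starting from an initial blue set $B$, a forcing sequence is a chronologically ordered list of forces, each valid at the moment it is performed. $B$ is a zero forcing set if some forcing sequence colors all of $V(G)$ blue; the set of forces of such a sequence is called a forcing process of $B$. $\mathcal{F}(B)$ denotes the set of all forces $u\to v$ that occur in some forcing process of $B$ (one that colors all of $G$ blue). An edge leak is an edge $xy\in E(G)$ across which no force may be performed (neither $x\to y$ nor $y\to x$ is allowed). $B$ is an $\ell$-edge-leaky forcing set if for every set $L$ of at most $\ell$ edge leaks, exhaustively applying the forcing rule from $B$ without ever forcing across an edge of $L$ colors all of $V(G)$ blue. *)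

theory Defs
  imports Main
begin

definition simple_graph :: "'a set \<Rightarrow> ('a \<Rightarrow> 'a \<Rightarrow> bool) \<Rightarrow> bool" where
  "simple_graph V E \<longleftrightarrow> finite V \<and> (\<forall>x y. E x y \<longrightarrow> E y x) \<and> (\<forall>x. \<not> E x x)
     \<and> (\<forall>x y. E x y \<longrightarrow> x \<in> V \<and> y \<in> V)"

definition valid_force :: "'a set \<Rightarrow> ('a \<Rightarrow> 'a \<Rightarrow> bool) \<Rightarrow> 'a set \<Rightarrow> 'a \<Rightarrow> 'a \<Rightarrow> bool" where
  "valid_force V E S u w \<longleftrightarrow> u \<in> V \<and> w \<in> V \<and> E u w \<and> u \<in> S \<and> w \<notin> S \<and>
     (\<forall>z\<in>V. E u z \<and> z \<notin> S \<longrightarrow> z = w)"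

text \<open>Forcing sequence from blue set S, never forcing across an edge of the leak set L
  (edges are represented as two-element sets).\<close>
fun forcing_seq :: "'a set \<Rightarrow> ('a \<Rightarrow> 'a \<Rightarrow> bool) \<Rightarrow> 'a set set \<Rightarrow> 'a set \<Rightarrow> ('a \<times> 'a) list \<Rightarrow> bool" where
  "forcing_seq V E L S [] = True"
| "forcing_seq V E L S ((u, w) # fs) =
     (valid_force V E S u w \<and> {u, w} \<notin> L \<and> forcing_seq V E L (insert w S) fs)"

definition final_blue :: "'a set \<Rightarrow> ('a \<times> 'a) list \<Rightarrow> 'a set" where
  "final_blue S fs = S \<union> snd ` set fs"

definition forcing_process :: "'a set \<Rightarrow> ('a \<Rightarrow> 'a \<Rightarrow> bool) \<Rightarrow> 'a set \<Rightarrow> ('a \<times> 'a) set \<Rightarrow> bool" where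
  "forcing_process V E B P \<longleftrightarrow>
     (\<exists>fs. forcing_seq V E {} B fs \<and> final_blue B fs = V \<and> P = set fs)"

definition all_forces :: "'a set \<Rightarrow> ('a \<Rightarrow> 'a \<Rightarrow> bool) \<Rightarrow> 'a set \<Rightarrow> ('a \<times> 'a) set" where
  "all_forces V E B = \<Union> {P. forcing_process V E B P}"

definition edge_set :: "('a \<Rightarrow> 'a \<Rightarrow> bool) \<Rightarrow> 'a set set" where
  "edge_set E = {{x, y} | x y. E x y}"

text \<open>B is l-edge-leaky forcing: for every set L of at most l edge leaks, exhaustively applying
  the forcing rule (i.e. any forcing sequence avoiding L that cannot be extended) colours all of V.\<close>
definition edge_leaky_forcing_set :: "'a set \<Rightarrow> ('a \<Rightarrow> 'a \<Rightarrow> bool) \<Rightarrow> nat \<Rightarrow> 'a set \<Rightarrow> bool" where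
  "edge_leaky_forcing_set V E l B \<longleftrightarrow>
     (\<forall>L. L \<subseteq> edge_set E \<and> card L \<le> l \<longrightarrow>
        (\<forall>fs. forcing_seq V E L B fs \<and>
              \<not> (\<exists>u w. valid_force V E (final_blue B fs) u w \<and> {u, w} \<notin> L)
              \<longrightarrow> final_blue B fs = V))"

end

theory Submission
  imports Defs
begin

lemma fs_props:
  assumes "forcing_seq V E L T fs" "(a,b) \<in> set fs"
  shows "{a,b} \<notin> L \<and> E a b \<and> b \<in> V \<and> b \<notin> T"
  using assms
proof (induction fs arbitrary: T)
  case Nil then show ?case by simp
next
  case (Cons p fs)
  obtain u w where p: "p = (u,w)" by fastforce
  show ?case
  proof (cases "(a,b) = (u,w)")
    case True then show ?thesis using Cons.prems p by (auto simp: valid_force_def)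
  next
    case False
    then have "(a,b) \<in> set fs" using Cons.prems p by auto
    then show ?thesis using Cons.IH[of "insert w T"] Cons.prems p by auto
  qed
qed

lemma fs_unique:
  assumes "forcing_seq V E L T fs" "(x,b) \<in> set fs" "(y,b) \<in> set fs"
  shows "x = y"
  using assms
proof (induction fs arbitrary: T)
  case Nil then show ?case by simp
next
  case (Cons p fs)
  obtain u w where p: "p = (u,w)" by fastforce
  have tl: "forcing_seq V E L (insert w T) fs" using Cons.prems p by simp
  show ?case
  proof (cases "(x,b) \<in> set fs \<and> (y,b) \<in> set fs")
    case True then show ?thesis using Cons.IH tl by blast
  next
    case False
    then have "b = w" using Cons.prems p by auto
    then show ?thesis using Cons.prems p fs_props[OF tl, of x b] fs_props[OF tl, of y b] by auto
  qed
qed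

lemma fs_mono: "forcing_seq V E L T fs \<Longrightarrow> forcing_seq V E {} T fs"
  by (induction fs arbitrary: T) auto

lemma final_cons: "final_blue T ((u,w)#fs) = final_blue (insert w T) fs"
  by (auto simp: final_blue_def)

lemma fs_sub: "forcing_seq V E L T fs \<Longrightarrow> T \<subseteq> V \<Longrightarrow> final_blue T fs \<subseteq> V"
  unfolding final_blue_def using fs_props by fastforce

definition maxseq :: "'a set \<Rightarrow> ('a \<Rightarrow> 'a \<Rightarrow> bool) \<Rightarrow> 'a set set \<Rightarrow> 'a set \<Rightarrow> ('a \<times> 'a) list \<Rightarrow> bool" where
  "maxseq V E L T fs \<longleftrightarrow> forcing_seq V E L T fs \<and>
     \<not> (\<exists>u w. valid_force V E (final_blue T fs) u w \<and> {u,w} \<notin> L)"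

lemma exists_max0:
  assumes "finite V"
  shows "\<exists>fs. maxseq V E L T fs"
proof (induction "card (V - T)" arbitrary: T rule: less_induct)
  case less
  show ?case
  proof (cases "\<exists>u w. valid_force V E T u w \<and> {u,w} \<notin> L")
    case False
    then show ?thesis by (intro exI[of _ "[]"]) (simp add: final_blue_def maxseq_def)
  next
    case True
    then obtain u w where uw: "valid_force V E T u w" "{u,w} \<notin> L" by blast
    then have "w \<in> V" "w \<notin> T" by (auto simp: valid_force_def)
    then have "card (V - insert w T) < card (V - T)"
      using assms by (metis Diff_insert card_Diff1_less finite_Diff DiffI)
    then obtain fs where "maxseq V E L (insert w T) fs"
      using less[of "insert w T"] by blast
    then show ?thesis using uw by (intro exI[of _ "(u,w)#fs"]) (simp add: final_cons maxseq_def)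
  qed
qed

lemma exists_max:
  assumes "finite V"
  shows "\<exists>fs. forcing_seq V E L T fs \<and> \<not> (\<exists>u w. valid_force V E (final_blue T fs) u w \<and> {u,w} \<notin> L)"
  using exists_max0[OF assms] unfolding maxseq_def by blast

lemma first_out:
  assumes "forcing_seq V E {} T fs" "T \<subseteq> S" "\<not> final_blue T fs \<subseteq> S"
  shows "\<exists>u w. (u,w) \<in> set fs \<and> u \<in> S \<and> w \<notin> S \<and> valid_force V E S u w"
  using assms
proof (induction fs arbitrary: T)
  case Nil then show ?case by (simp add: final_blue_def)
next
  case (Cons p fs)
  obtain u w where p: "p = (u,w)" by fastforce
  have vf: "valid_force V E T u w" and tl: "forcing_seq V E {} (insert w T) fs"
    using Cons.prems p by auto
  show ?case
  proof (cases "w \<in> S")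
    case True
    then have "insert w T \<subseteq> S" using Cons.prems by auto
    moreover have "\<not> final_blue (insert w T) fs \<subseteq> S" using Cons.prems p final_cons by metis
    ultimately show ?thesis using Cons.IH tl p by fastforce
  next
    case False
    have uS: "u \<in> S" using vf Cons.prems(2) unfolding valid_force_def by blast
    have "valid_force V E S u w"
      using vf False uS Cons.prems(2) unfolding valid_force_def by (meson subsetD)
    then show ?thesis using p False uS by auto
  qed
qed

lemma leakyD:
  assumes "edge_leaky_forcing_set V E l B" "L \<subseteq> edge_set E" "card L \<le> l"
    "forcing_seq V E L B fs" "\<not> (\<exists>u w. valid_force V E (final_blue B fs) u w \<and> {u, w} \<notin> L)"
  shows "final_blue B fs = V"
  using assms unfolding edge_leaky_forcing_set_def by blast

lemma in_all_forces:
  "(x,v) \<in> all_forces V E B \<longleftrightarrow>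
     (\<exists>fs. forcing_seq V E {} B fs \<and> final_blue B fs = V \<and> (x,v) \<in> set fs)"
  unfolding all_forces_def forcing_process_def by blast

theorem theorem2p1:
  fixes V :: "'a set" and E :: "'a \<Rightarrow> 'a \<Rightarrow> bool" and B :: "'a set"
  assumes "simple_graph V E" and "B \<subseteq> V"
  shows "edge_leaky_forcing_set V E 1 B \<longleftrightarrow>
    (\<forall>v \<in> V - B. \<exists>x y. (x, v) \<in> all_forces V E B \<and> (y, v) \<in> all_forces V E B \<and> x \<noteq> y)"
proof
  have finV: "finite V" using assms(1) by (simp add: simple_graph_def)
  assume lk: "edge_leaky_forcing_set V E 1 B"
  show "\<forall>v \<in> V - B. \<exists>x y. (x, v) \<in> all_forces V E B \<and> (y, v) \<in> all_forces V E B \<and> x \<noteq> y"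
  proof
    fix v assume v: "v \<in> V - B"
    obtain fs0 where f0: "forcing_seq V E {} B fs0"
      "\<not> (\<exists>u w. valid_force V E (final_blue B fs0) u w \<and> {u,w} \<notin> {})"
      using exists_max[OF finV] by blast
    have "final_blue B fs0 = V"
    proof -
      have "{} \<subseteq> edge_set E \<and> card ({}::'a set set) \<le> 1" by simp
      then show ?thesis using leakyD[OF lk _ _ f0] by simp
    qed
    then obtain x where x: "(x,v) \<in> set fs0" using v by (auto simp: final_blue_def)
    have Exv: "E x v" using fs_props[OF f0(1) x] by simp
    define L where "L = {{x,v}}"
    have "{x,v} \<in> edge_set E"
      unfolding edge_set_def mem_Collect_eq using Exv by (intro exI[of _ x] exI[of _ v]) simp
    then have Ls: "L \<subseteq> edge_set E" "card L \<le> 1"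
      unfolding L_def by simp_all
    obtain fs1 where f1: "forcing_seq V E L B fs1"
      "\<not> (\<exists>u w. valid_force V E (final_blue B fs1) u w \<and> {u,w} \<notin> L)"
      using exists_max[OF finV] by blast
    have fb1: "final_blue B fs1 = V" using leakyD[OF lk Ls f1] .
    then obtain y where y: "(y,v) \<in> set fs1" using v by (auto simp: final_blue_def)
    have "{y,v} \<notin> L" using fs_props[OF f1(1) y] by simp
    then have "y \<noteq> x" by (auto simp: L_def)
    moreover have "(x,v) \<in> all_forces V E B" unfolding in_all_forces
      using f0(1) x \<open>final_blue B fs0 = V\<close> by (intro exI[of _ fs0]) simp
    moreover have "(y,v) \<in> all_forces V E B" unfolding in_all_forces
      using fs_mono[OF f1(1)] y fb1 by (intro exI[of _ fs1]) simp
    ultimately show "\<exists>x y. (x, v) \<in> all_forces V E B \<and> (y, v) \<in> all_forces V E B \<and> x \<noteq> y" by blast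
  qed
next
  have finV: "finite V" using assms(1) by (simp add: simple_graph_def)
  have finE: "finite (edge_set E)"
  proof (rule finite_subset[of _ "Pow V"])
    show "edge_set E \<subseteq> Pow V" using assms(1) by (auto simp: edge_set_def simple_graph_def)
  qed (use finV in simp)
  assume H: "\<forall>v \<in> V - B. \<exists>x y. (x, v) \<in> all_forces V E B \<and> (y, v) \<in> all_forces V E B \<and> x \<noteq> y"
  show "edge_leaky_forcing_set V E 1 B"
    unfolding edge_leaky_forcing_set_def
  proof (intro allI impI)
    fix L fs
    assume L: "L \<subseteq> edge_set E \<and> card L \<le> 1"
    assume f: "forcing_seq V E L B fs \<and>
              \<not> (\<exists>u w. valid_force V E (final_blue B fs) u w \<and> {u, w} \<notin> L)"
    define S where "S = final_blue B fs"
    have BS: "B \<subseteq> S" by (auto simp: S_def final_blue_def)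
    have SV: "S \<subseteq> V" unfolding S_def using fs_sub[of V E L B fs] f assms(2) by simp
    have finL: "finite L" using L finE by (meson finite_subset)
    have "card L \<le> Suc 0" using L by simp
    then have Lone': "\<forall>a\<in>L. \<forall>b\<in>L. a = b" using card_le_Suc0_iff_eq[OF finL] by simp
    have Lone: "\<And>a b. a \<in> L \<Longrightarrow> b \<in> L \<Longrightarrow> a = b" using Lone' by simp
    have key: "\<exists>u w. (u,w) \<in> set fs' \<and> u \<in> S \<and> w \<notin> S \<and> {u,w} \<in> L"
      if h: "forcing_seq V E {} B fs'" "final_blue B fs' = V" "\<not> V \<subseteq> S" for fs'
    proof -
      obtain u w where "(u,w) \<in> set fs'" "u \<in> S" "w \<notin> S" "valid_force V E S u w"
        using first_out[OF h(1) BS] h(2,3) by blast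
      then show ?thesis using f S_def by blast
    qed
    show "final_blue B fs = V"
    proof (rule ccontr)
      assume "final_blue B fs \<noteq> V"
      then have nVS: "\<not> V \<subseteq> S" using SV S_def by blast
      then obtain v where v: "v \<in> V" "v \<notin> S" by blast
      then obtain x where "(x,v) \<in> all_forces V E B" using H BS by blast
      then obtain fsx where fx: "forcing_seq V E {} B fsx" "final_blue B fsx = V"
        unfolding in_all_forces by blast
      obtain a b where ab: "(a,b) \<in> set fsx" "a \<in> S" "b \<notin> S" "{a,b} \<in> L"
        using key[OF fx nVS] by blast
      have bV: "b \<in> V" using fs_props[OF fx(1) ab(1)] by simp
      have uniq: "(a,b) \<in> set fs'" if h: "forcing_seq V E {} B fs'" "final_blue B fs' = V" for fs'
      proof -
        obtain c d where cd: "(c,d) \<in> set fs'" "c \<in> S" "d \<notin> S" "{c,d} \<in> L"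
          using key[OF h nVS] by blast
        have "{c,d} = {a,b}" using Lone cd(4) ab(4) by blast
        then have "c = a \<and> d = b" using cd(2,3) ab(2,3) by (metis doubleton_eq_iff)
        then show ?thesis using cd(1) by simp
      qed
      obtain x y where xy: "(x, b) \<in> all_forces V E B" "(y, b) \<in> all_forces V E B" "x \<noteq> y"
        using H bV ab(3) BS by blast
      obtain fs1 where g1: "forcing_seq V E {} B fs1" "final_blue B fs1 = V" "(x,b) \<in> set fs1"
        using xy(1) unfolding in_all_forces by blast
      obtain fs2 where g2: "forcing_seq V E {} B fs2" "final_blue B fs2 = V" "(y,b) \<in> set fs2"
        using xy(2) unfolding in_all_forces by blast
      have "x = a" using fs_unique[OF g1(1) g1(3) uniq[OF g1(1,2)]] .
      moreover have "y = a" using fs_unique[OF g2(1) g2(3) uniq[OF g2(1,2)]] .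
      ultimately show False using xy(3) by simp
    qed
  qed
qed

end
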